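(* Let $d\ge 2$ and let $\rho$ be a diagonal symmetric state on $\mathbb{C}^d\otimes\mathbb{C}^d$ that is PPT (i.e. $\rho^{T_B}\succeq 0$), and suppose its associated matrix $M(\rho)$ has rank at most $2$. Then $\rho$ is separable.
   Context: Let $\{\ket{0},\dots,\ket{d-1}\}$ be the computational basis of $\mathbb{C}^d$. Define $\ket{D_{ii}}=\ket{ii}$ and, for $i<j$, $\ket{D_{ij}}=(\ket{ij}+\ket{ji})/\sqrt{2}$. A state $\rho$ on $\mathbb{C}^d\otimes\mathbb{C}^d$ is diagonal symmetric (DS) if $\rho=\sum_{0\le i\le j<d}p_{ij}\ket{D_{ij}}\bra{D_{ij}}$ with $p_{ij}\ge 0$ and $\sum_{i\le j}p_{ij}=1$; set $p_{ji}=p_{ij}$. Its associated matrix $M(\rho)$ is the real symmetric $d\times d$ matrix with $M(\rho)_{ii}=p_{ii}$ and $M(\rho)_{ij}=p_{ij}/2$ for $i\ne j$. A state is separable if it is a convex combination of product states $\rho^A\otimes\rho^B$. The partial transpose $\rho^{T_B}$ is taken with respect to the computational basis of the second factor. *)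

theory Defs
  imports "HOL-Analysis.Analysis"
begin

definition ket :: "'a::finite \<Rightarrow> complex^'a" where
  "ket i = axis i 1"

definition proj :: "complex^'a \<Rightarrow> complex^'a^'a" where
  "proj v = (\<chi> a b. v $ a * cnj (v $ b))"

definition Dket :: "'n::finite \<Rightarrow> 'n \<Rightarrow> complex^('n \<times> 'n)" where
  "Dket i j = (if i = j then ket (i, i)
               else (1 / sqrt 2) *\<^sub>R (ket (i, j) + ket (j, i)))"

definition ds_state :: "('n::{finite,linorder} \<Rightarrow> 'n \<Rightarrow> real) \<Rightarrow> complex^('n\<times>'n)^('n\<times>'n)" where
  "ds_state p = (\<Sum>(i,j) \<in> {(i,j). i \<le> j}. p i j *\<^sub>R proj (Dket i j))"

definition assoc_matrix :: "('n::finite \<Rightarrow> 'n \<Rightarrow> real) \<Rightarrow> real^'n^'n" where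
  "assoc_matrix p = (\<chi> i j. if i = j then p i i else p i j / 2)"

definition mtrace :: "complex^'a^'a \<Rightarrow> complex" where
  "mtrace A = (\<Sum>i\<in>UNIV. A $ i $ i)"

text \<open>Positive semidefinite (over C, this includes hermiticity).\<close>
definition psd :: "complex^'a^'a \<Rightarrow> bool" where
  "psd A \<longleftrightarrow> (\<forall>x::complex^'a. (\<Sum>i\<in>UNIV. \<Sum>j\<in>UNIV. cnj (x $ i) * A $ i $ j * x $ j) \<in> \<real>
                 \<and> 0 \<le> Re (\<Sum>i\<in>UNIV. \<Sum>j\<in>UNIV. cnj (x $ i) * A $ i $ j * x $ j))"

definition density :: "complex^'a^'a \<Rightarrow> bool" where
  "density A \<longleftrightarrow> psd A \<and> mtrace A = 1"

definition kron :: "complex^'a^'a \<Rightarrow> complex^'b^'b \<Rightarrow> complex^('a::finite\<times>'b::finite)^('a\<times>'b)" where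
  "kron A B = (\<chi> r c. A $ fst r $ fst c * B $ snd r $ snd c)"

definition ptransB :: "complex^('a::finite\<times>'b::finite)^('a\<times>'b) \<Rightarrow> complex^('a\<times>'b)^('a\<times>'b)" where
  "ptransB R = (\<chi> r c. R $ (fst r, snd c) $ (fst c, snd r))"

definition PPT :: "complex^('a::finite\<times>'b::finite)^('a\<times>'b) \<Rightarrow> bool" where
  "PPT R \<longleftrightarrow> psd (ptransB R)"

definition separable :: "complex^('a::finite\<times>'b::finite)^('a\<times>'b) \<Rightarrow> bool" where
  "separable R \<longleftrightarrow> (\<exists>(m::nat) (w::nat \<Rightarrow> real) (A::nat \<Rightarrow> complex^'a^'a) (B::nat \<Rightarrow> complex^'b^'b).
     (\<forall>k<m. 0 \<le> w k \<and> density (A k) \<and> density (B k)) \<and> (\<Sum>k<m. w k) = 1 \<and>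
     R = (\<Sum>k<m. w k *\<^sub>R kron (A k) (B k)))"

end

theory Submission
  imports Defs
begin

lemma rank2_span:
  fixes M :: "real^'n^'n"
  assumes r: "rank M \<le> 2" and ind: "\<And>u v. u *\<^sub>R M$k + v *\<^sub>R M$l = 0 \<Longrightarrow> u = 0 \<and> v = 0"
  shows "\<exists>a b. M$i = a *\<^sub>R M$k + b *\<^sub>R M$l"
proof (rule ccontr)
  assume n: "\<not> ?thesis"
  have ne: "M$k \<noteq> M$l"
  proof
    assume "M$k = M$l"
    then have "1 *\<^sub>R M$k + (-1) *\<^sub>R M$l = 0" by simp
    then show False using ind by fastforce
  qed
  have y0: "M$l \<noteq> 0"
  proof
    assume "M$l = 0"
    then have "0 *\<^sub>R M$k + 1 *\<^sub>R M$l = 0" by simp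
    then show False using ind by fastforce
  qed
  have x: "M$k \<notin> span {M$l}"
  proof
    assume "M$k \<in> span {M$l}"
    then obtain c where "M$k = c *\<^sub>R M$l" by (auto simp: span_singleton)
    then have "1 *\<^sub>R M$k + (-c) *\<^sub>R M$l = 0" by simp
    then show False using ind by fastforce
  qed
  have "independent {M$l}" using y0 by simp
  then have i2: "independent {M$k, M$l}" by (rule independent_insertI[OF x])
  have xi: "M$i \<notin> span {M$k, M$l}"
  proof
    assume "M$i \<in> span {M$k, M$l}"
    then obtain a where "M$i - a *\<^sub>R M$k \<in> span {M$l}" by (subst (asm) span_breakdown_eq) blast
    then obtain b where "M$i - a *\<^sub>R M$k = b *\<^sub>R M$l" by (auto simp: span_singleton)
    then have "M$i = a *\<^sub>R M$k + b *\<^sub>R M$l" by (simp add: algebra_simps)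
    then show False using n by blast
  qed
  then have i3: "independent {M$i, M$k, M$l}" by (rule independent_insertI[OF _ i2])
  have nik: "M$i \<notin> {M$k, M$l}"
  proof
    assume "M$i \<in> {M$k, M$l}"
    then have "M$i \<in> span {M$k, M$l}" by (rule span_base)
    with xi show False by contradiction
  qed
  have rw: "M$x \<in> rows M" for x
  proof -
    have rx: "M$x = row x M" unfolding row_def vec_lambda_eta ..
    show ?thesis unfolding rows_def by (intro CollectI exI[of _ x] conjI rx UNIV_I)
  qed
  have "card {M$i, M$k, M$l} \<le> dim (rows M)"
    by (rule independent_card_le_dim[OF _ i3]) (simp add: rw)
  also have "\<dots> \<le> 2" using r by (simp add: row_rank_def)
  finally show False using nik ne by simp
qed


lemma roots_sum:
  fixes m :: int and N :: nat
  assumes N: "N > 0" and mN: "\<bar>m\<bar> < int N"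
  shows "(\<Sum>t<N. cis (2*pi*real t * of_int m/real N)) = (if m = 0 then of_nat N else 0)"
proof (cases "m = 0")
  case True then show ?thesis by simp
next
  case False
  define z where "z = cis (2*pi * of_int m/real N)"
  have zt: "cis (2*pi*real t * of_int m/real N) = z^t" for t
    unfolding z_def Complex.DeMoivre by (simp add: algebra_simps)
  have z1: "z \<noteq> 1"
  proof
    assume "z = 1"
    then have "cos (2*pi * of_int m/real N) = 1" unfolding z_def by (metis cis.sel(1) one_complex.sel(1))
    then obtain n :: int where n: "2*pi * of_int m/real N = of_int n * 2 * pi" by (auto simp: cos_one_2pi_int)
    then have "of_int m = real N * of_int n" using N by (simp add: field_simps)
    then have mn: "m = int N * n" by (metis of_int_eq_iff of_int_mult of_int_of_nat_eq)
    show False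
    proof (cases "n = 0")
      case True then show False using mn False by simp
    next
      case n0: False
      have "\<bar>m\<bar> = int N * \<bar>n\<bar>" using mn by (simp add: abs_mult)
      also have "\<dots> \<ge> int N" using n0 by (simp add: mult_le_cancel_left1) (smt (verit) mult_le_cancel_left1)
      finally show False using mN by simp
    qed
  qed
  have zN: "z^N = 1"
  proof -
    have "z^N = cis (real N * (2*pi * of_int m/real N))" unfolding z_def Complex.DeMoivre ..
    also have "\<dots> = cis (2*pi * of_int m)" using N by simp
    also have "\<dots> = 1" by (rule cis_multiple_2pi) simp
    finally show ?thesis .
  qed
  show ?thesis unfolding zt using z1 zN False by (simp add: geometric_sum)
qed

lemma pow3_zero:
  assumes "1 + 3^b = (3::nat)^c + 3^d"
  shows "(c = 0 \<and> b = d) \<or> (d = 0 \<and> b = c)"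
proof -
  have m: "(3::nat)^k mod 3 = (if k = 0 then 1 else 0)" for k by (cases k) auto
  have "c = 0 \<or> d = 0"
  proof (rule ccontr)
    assume "\<not> ?thesis"
    then have "(3^c + 3^d) mod 3 = (0::nat)" using m by (simp add: mod_add_eq[symmetric])
    moreover have "(1 + 3^b) mod 3 \<noteq> (0::nat)"
    proof -
      have "(1 + 3^b) mod 3 = (1 mod 3 + 3^b mod 3) mod (3::nat)" by (rule mod_add_eq[symmetric])
      then show ?thesis using m[of b] by (cases "b = 0") simp_all
    qed
    ultimately show False using assms by simp
  qed
  then show ?thesis using assms by auto
qed

lemma pow3_eq:
  "(3::nat)^a + 3^b = 3^c + 3^d \<Longrightarrow> (a = c \<and> b = d) \<or> (a = d \<and> b = c)"
proof (induction "a+b+c+d" arbitrary: a b c d rule: less_induct)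
  case less
  show ?case
  proof (cases "a = 0 \<or> b = 0 \<or> c = 0 \<or> d = 0")
    case True
    then show ?thesis
    proof (elim disjE)
      assume "a = 0" then show ?thesis using pow3_zero[of b c d] less.prems by auto
    next
      assume "b = 0" then show ?thesis using pow3_zero[of a c d] less.prems by (auto simp: add.commute)
    next
      assume "c = 0" then show ?thesis using pow3_zero[of d a b] less.prems by auto
    next
      assume "d = 0" then show ?thesis using pow3_zero[of c a b] less.prems by (auto simp: add.commute)
    qed
  next
    case False
    then obtain a' b' c' d' where e: "a = Suc a'" "b = Suc b'" "c = Suc c'" "d = Suc d'"
      by (metis not0_implies_Suc)
    have "3 * (3^a' + 3^b') = 3 * ((3::nat)^c' + 3^d')" using less.prems by (simp add: e algebra_simps)
    then have "(3::nat)^a' + 3^b' = 3^c' + 3^d'" by simp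
    from less.hyps[OF _ this] show ?thesis using e by simp
  qed
qed



lemma key_arith:
  fixes A B C \<alpha> \<beta> :: real
  assumes A: "A > 0" and B: "B > 0" and C: "C \<ge> 0" and D: "A*B - C^2 > 0"
    and a: "\<alpha> < 0" and x: "\<alpha>*A + \<beta>*C \<ge> 0"
  shows "\<alpha>*(\<alpha>*A + \<beta>*C) + \<beta>*(\<alpha>*C + \<beta>*B) > 0"
    and "(\<alpha>*A + \<beta>*C)^2 / ((\<alpha>*(\<alpha>*A + \<beta>*C) + \<beta>*(\<alpha>*C + \<beta>*B)) * A) < C^2/(A*B)"
proof -
  have bc: "\<beta>*C > 0"
  proof -
    have "\<alpha>*A < 0" using a A by (simp add: mult_neg_pos)
    then show ?thesis using x by linarith
  qed
  then have b0: "\<beta> \<noteq> 0" by auto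
  define m where "m = \<alpha>*(\<alpha>*A + \<beta>*C) + \<beta>*(\<alpha>*C + \<beta>*B)"
  have "m * A = (\<alpha>*A + \<beta>*C)^2 + \<beta>^2 * (A*B - C^2)"
    unfolding m_def by (simp add: algebra_simps power2_eq_square)
  moreover have "\<beta>^2 * (A*B - C^2) > 0" using b0 D by simp
  ultimately have "m * A > 0" by (smt (verit) zero_le_power2)
  then have m: "m > 0" using A by (simp add: zero_less_mult_iff)
  then show "\<alpha>*(\<alpha>*A + \<beta>*C) + \<beta>*(\<alpha>*C + \<beta>*B) > 0" unfolding m_def .
  have id: "B*(\<alpha>*A + \<beta>*C)^2 - C^2 * m = \<alpha>*(A*B - C^2)*(\<alpha>*A + 2*\<beta>*C)"
    unfolding m_def by (simp add: algebra_simps power2_eq_square)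
  have "\<alpha>*A + 2*\<beta>*C > 0" using x bc by linarith
  then have "\<alpha>*(A*B - C^2)*(\<alpha>*A + 2*\<beta>*C) < 0" using a D
    by (simp add: mult_neg_pos)
  then have lt: "B*(\<alpha>*A + \<beta>*C)^2 < C^2 * m" using id by linarith
  have "(\<alpha>*A + \<beta>*C)^2 / (m * A) < C^2/(A*B) \<longleftrightarrow> (\<alpha>*A + \<beta>*C)^2 * (A*B) < C^2 * (m*A)"
    using m A B by (simp add: divide_simps)
  also have "\<dots> \<longleftrightarrow> A * (B*(\<alpha>*A + \<beta>*C)^2) < A * (C^2 * m)" by (simp add: algebra_simps)
  also have "\<dots>" using lt A by simp
  finally show "(\<alpha>*A + \<beta>*C)^2 / ((\<alpha>*(\<alpha>*A + \<beta>*C) + \<beta>*(\<alpha>*C + \<beta>*B)) * A) < C^2/(A*B)"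
    unfolding m_def .
qed

lemma ab_expand:
  fixes s t x y x' y' C :: real
  assumes "s \<noteq> 0"
  shows "(x * s + y * C / s) * (x' * s + y' * C / s) + (y * t) * (y' * t) = x * x' * (s * s) + (x * y' + y * x') * C + y * y' * (C * C / (s * s) + t * t)"
  using assms by (simp add: field_simps)

lemma cp_decomp:
  fixes M :: "'n::finite \<Rightarrow> 'n \<Rightarrow> real"
  assumes sym: "\<And>i j. M i j = M j i" and nn: "\<And>i j. M i j \<ge> 0"
    and psd2: "\<And>i j. (M i j)^2 \<le> M i i * M j j"
    and span: "\<And>k l i. M k k * M l l - (M k l)^2 \<noteq> 0 \<Longrightarrow> \<exists>x y. \<forall>j. M i j = x * M k j + y * M l j"
  shows "\<exists>a b. (\<forall>i. a i \<ge> 0 \<and> b i \<ge> 0) \<and> (\<forall>i j. M i j = a i * a j + b i * b j)"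
proof -
  define P where "P = {(i,j). M i i > 0 \<and> M j j > 0}"
  define f where "f = (\<lambda>(i,j). (M i j)^2 / (M i i * M j j))"
  have zero_row: "M i j = 0" if "M i i = 0" for i j
    using psd2[of i j] that by simp
  show ?thesis
  proof (cases "P = {}")
    case True
    have "M i i = 0" for i
    proof -
      have "(i,i) \<notin> P" using True by simp
      then show ?thesis using nn[of i i] by (simp add: P_def)
    qed
    then have "M i j = 0" for i j using zero_row by blast
    then show ?thesis by (intro exI[of _ "\<lambda>_. 0"]) auto
  next
    case False
    have "finite P" by simp
    define q where "q = arg_min_on f P"
    have q: "q \<in> P" "\<And>q'. q' \<in> P \<Longrightarrow> f q \<le> f q'"
      using arg_min_if_finite(1)[OF \<open>finite P\<close> False, of f] arg_min_least[OF \<open>finite P\<close> False, of _ f]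
      by (auto simp: q_def)
    obtain k l where kl: "q = (k,l)" by fastforce
    define A where "A = M k k"
    define B where "B = M l l"
    define C where "C = M k l"
    have A: "A > 0" and B: "B > 0" using q(1) kl by (auto simp: P_def A_def B_def)
    have C: "C \<ge> 0" using nn by (simp add: C_def)
    have D0: "A*B - C^2 \<ge> 0" using psd2[of k l] by (simp add: A_def B_def C_def)
    have fmin: "C^2/(A*B) \<le> f q'" if "q' \<in> P" for q'
      using q(2)[OF that] kl by (simp add: f_def A_def B_def C_def)
    show ?thesis
    proof (cases "A*B - C^2 = 0")
      case True
      have "C^2 = A*B" using True by simp
      then have f1: "C^2/(A*B) = 1" using A B by (simp only: divide_self) simp
      have eq: "M i j = sqrt (M i i) * sqrt (M j j)" for i j
      proof (cases "M i i > 0 \<and> M j j > 0")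
        case True
        then have "(i,j) \<in> P" by (simp add: P_def)
        from fmin[OF this] f1 have "1 \<le> (M i j)^2 / (M i i * M j j)" unfolding f_def prod.case by simp
        moreover have y: "M i i * M j j > 0" using True by simp
        ultimately have "M i i * M j j \<le> (M i j)^2" by (simp add: le_divide_eq)
        then have e2: "(M i j)^2 = M i i * M j j" using psd2[of i j] by linarith
        have "M i j = sqrt ((M i j)^2)" using nn[of i j] by simp
        also have "\<dots> = sqrt (M i i) * sqrt (M j j)" unfolding e2 by (rule real_sqrt_mult)
        finally show ?thesis .
      next
        case False
        then have "M i i = 0 \<or> M j j = 0" using nn[of i i] nn[of j j] by linarith
        then show ?thesis
        proof
          assume h: "M i i = 0" then show ?thesis using zero_row[OF h, of j] by simp
        next
          assume h: "M j j = 0" then show ?thesis using zero_row[OF h, of i] sym[of i j] by simp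
        qed
      qed
      define a where "a i = sqrt (M i i)" for i
      define b :: "'n \<Rightarrow> real" where "b i = 0" for i
      have h2: "\<forall>i j. M i j = a i * a j + b i * b j"
        unfolding a_def b_def by (intro allI, simp only: mult_zero_left add_0_right, rule eq)
      have h1: "\<forall>i. a i \<ge> 0 \<and> b i \<ge> 0" unfolding a_def b_def using nn by simp
      from h1 h2 show ?thesis by (intro exI[of _ a] exI[of _ b] conjI)
    next
      case False
      then have D: "A*B - C^2 > 0" using D0 by linarith
      have "\<forall>i. \<exists>x y. \<forall>j. M i j = x * M k j + y * M l j"
        using span False by (simp add: A_def B_def C_def)
      then have "\<forall>i. \<exists>xy. \<forall>j. M i j = fst xy * M k j + snd xy * M l j" by simp
      from choice[OF this] obtain F where F: "\<forall>i. \<forall>j. M i j = fst (F i) * M k j + snd (F i) * M l j" ..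
      define \<alpha> where "\<alpha> i = fst (F i)" for i
      define \<beta> where "\<beta> i = snd (F i)" for i
      have ab: "M i j = \<alpha> i * M k j + \<beta> i * M l j" for i j unfolding \<alpha>_def \<beta>_def using F by blast
      have ik: "M i k = \<alpha> i * A + \<beta> i * C" for i using ab[of i k] sym[of l k] by (simp add: A_def C_def)
      have il: "M i l = \<alpha> i * C + \<beta> i * B" for i using ab[of i l] by (simp add: B_def C_def)
      have ii: "M i i = \<alpha> i * (\<alpha> i * A + \<beta> i * C) + \<beta> i * (\<alpha> i * C + \<beta> i * B)" for i
        using ab[of i i] ik[of i] il[of i] sym[of k i] sym[of l i] by simp
      have apos: "\<alpha> i \<ge> 0" for i
      proof (rule ccontr)
        assume "\<not> ?thesis"
        then have a: "\<alpha> i < 0" by simp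
        have x: "\<alpha> i * A + \<beta> i * C \<ge> 0" using nn[of i k] ik by simp
        note K = key_arith[OF A B C D a x]
        have Mkk: "M k k = A" by (simp add: A_def)
        have "M i i > 0" using K(1) ii[of i] by simp
        then have "(i,k) \<in> P" using A by (simp add: P_def Mkk)
        from fmin[OF this] have "C^2/(A*B) \<le> (M i k)^2 / (M i i * M k k)" by (simp add: f_def)
        also have "(M i k)^2 / (M i i * M k k) = (\<alpha> i * A + \<beta> i * C)^2 / ((\<alpha> i * (\<alpha> i * A + \<beta> i * C) + \<beta> i * (\<alpha> i * C + \<beta> i * B)) * A)"
          by (simp only: ik[of i] ii[of i] Mkk)
        finally show False using K(2) by linarith
      qed
      have bpos: "\<beta> i \<ge> 0" for i
      proof (rule ccontr)
        assume "\<not> ?thesis"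
        then have a: "\<beta> i < 0" by simp
        have x: "\<beta> i * B + \<alpha> i * C \<ge> 0" using nn[of i l] il by (simp add: algebra_simps)
        have D': "B*A - C^2 > 0" using D by (simp add: algebra_simps)
        note K = key_arith[OF B A C D' a x]
        have e: "\<beta> i * (\<beta> i * B + \<alpha> i * C) + \<alpha> i * (\<beta> i * C + \<alpha> i * A) = M i i"
          by (simp add: ii algebra_simps)
        have Mll: "M l l = B" by (simp add: B_def)
        have "M i i > 0" using K(1) e by simp
        then have "(i,l) \<in> P" using B by (simp add: P_def Mll)
        from fmin[OF this] have "C^2/(A*B) \<le> (M i l)^2 / (M i i * M l l)" by (simp add: f_def)
        also have "(M i l)^2 / (M i i * M l l) = (\<beta> i * B + \<alpha> i * C)^2 / ((\<beta> i * (\<beta> i * B + \<alpha> i * C) + \<alpha> i * (\<beta> i * C + \<alpha> i * A)) * B)"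
          by (simp only: il[of i] e[symmetric] Mll add.commute)
        also have "C^2/(A*B) = C^2/(B*A)" by (simp add: mult.commute)
        finally show False using K(2) by linarith
      qed
      define a where "a i = \<alpha> i * sqrt A + \<beta> i * C / sqrt A" for i
      define b where "b i = \<beta> i * sqrt ((A*B - C^2)/A)" for i
      have sA: "sqrt A * sqrt A = A" using A by simp
      have sD: "sqrt ((A*B - C^2)/A) * sqrt ((A*B - C^2)/A) = (A*B - C^2)/A" using A D by simp
      have "M i j = a i * a j + b i * b j" for i j
      proof -
        have "M i j = \<alpha> i * M j k + \<beta> i * M j l" using ab[of i j] sym[of k j] sym[of l j] by simp
        also have "\<dots> = \<alpha> i * \<alpha> j * A + (\<alpha> i * \<beta> j + \<beta> i * \<alpha> j) * C + \<beta> i * \<beta> j * B"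
          by (simp add: ik il algebra_simps)
        also have "\<dots> = a i * a j + b i * b j"
        proof -
          have s0: "sqrt A \<noteq> 0" using A by simp
          have "a i * a j + b i * b j = \<alpha> i * \<alpha> j * (sqrt A * sqrt A) + (\<alpha> i * \<beta> j + \<beta> i * \<alpha> j) * C
                 + \<beta> i * \<beta> j * (C * C / (sqrt A * sqrt A) + sqrt ((A*B - C^2)/A) * sqrt ((A*B - C^2)/A))"
            unfolding a_def b_def using s0 by (rule ab_expand)
          also have "C * C / (sqrt A * sqrt A) + sqrt ((A*B - C^2)/A) * sqrt ((A*B - C^2)/A) = B"
            unfolding sA sD using A by (simp add: field_simps power2_eq_square)
          finally show ?thesis unfolding sA by simp
        qed
        finally show ?thesis .
      qed
      moreover have "a i \<ge> 0 \<and> b i \<ge> 0" for i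
        using apos[of i] bpos[of i] A C D unfolding a_def b_def by simp
      ultimately show ?thesis by blast
    qed
  qed
qed



definition q0 :: "'n::linorder \<times> 'n \<Rightarrow> 'n \<times> 'n" where
  "q0 r = (min (fst r) (snd r), max (fst r) (snd r))"

lemma ket_entry: "ket i $ j = (if j = i then 1 else 0)"
  unfolding ket_def axis_def by simp

lemma Dket_entry:
  fixes i j :: "'n::{finite,linorder}"
  assumes "i \<le> j"
  shows "Dket i j $ r = (if (i,j) = q0 r then (if fst r = snd r then 1 else complex_of_real (1/sqrt 2)) else 0)"
proof -
  obtain x y where r: "r = (x,y)" by fastforce
  show ?thesis
  proof (cases "i = j")
    case True
    have "((i,i) = (min x y, max x y)) \<longleftrightarrow> x = i \<and> y = i"
      by (auto simp: min_def max_def)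
    moreover have "Dket i j = ket (i,i)" using True by (simp add: Dket_def)
    ultimately show ?thesis using True by (simp add: r ket_entry q0_def)
  next
    case False
    then have ij: "i < j" using assms by simp
    have e1: "((i,j) = (min x y, max x y)) \<longleftrightarrow> (x = i \<and> y = j) \<or> (x = j \<and> y = i)"
      using ij by (auto simp: min_def max_def)
    have "Dket i j $ r = complex_of_real (1/sqrt 2) * ((if (x,y) = (i,j) then 1 else 0) + (if (x,y) = (j,i) then 1 else 0))"
    proof -
      have "Dket i j $ r = (1/sqrt 2) *\<^sub>R (ket (i,j) $ r + ket (j,i) $ r)"
        using False by (simp only: Dket_def if_False vector_scaleR_component vector_add_component)
      then show ?thesis by (simp add: r ket_entry scaleR_conv_of_real)
    qed
    note D = this
    have ne: "i \<noteq> j" "j \<noteq> i" using ij by auto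
    show ?thesis
    proof (cases "x = i \<and> y = j")
      case True
      then show ?thesis using D ij ne by (simp add: r q0_def)
    next
      case c1: False
      show ?thesis
      proof (cases "x = j \<and> y = i")
        case True
        then show ?thesis using D ij ne by (simp add: r q0_def min_def max_def)
      next
        case False
        then show ?thesis using c1 D ij ne e1 by (simp add: r q0_def)
      qed
    qed
  qed
qed

lemma scaleR_entry: "((a::real) *\<^sub>R (A::complex^'a^'b)) $ r $ c = complex_of_real a * (A $ r $ c)"
  by (simp only: vector_scaleR_component) (simp add: scaleR_conv_of_real)

lemma ds_entry:
  fixes p :: "'n::{finite,linorder} \<Rightarrow> 'n \<Rightarrow> real"
  shows "ds_state p $ r $ c = (if q0 r = q0 c then complex_of_real (p (fst (q0 r)) (snd (q0 r)) * (if fst r = snd r then 1 else 1/2)) else 0)"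
proof -
  have "ds_state p $ r $ c = (\<Sum>q \<in> {(i,j). i \<le> j}. (if q = q0 r then (if q0 r = q0 c then complex_of_real (p (fst (q0 r)) (snd (q0 r)) * (if fst r = snd r then 1 else 1/2)) else 0) else 0))"
    unfolding ds_state_def sum_component
  proof (rule sum.cong[OF refl])
    fix q :: "'n \<times> 'n" assume "q \<in> {(i,j). i \<le> j}"
    then obtain i j where q: "q = (i,j)" "i \<le> j" by auto
    have fr: "fst r = snd r \<longleftrightarrow> fst c = snd c" if "q0 r = q0 c"
      using that by (cases r; cases c) (auto simp: q0_def min_def max_def split: if_splits)
    have s: "complex_of_real (1 / sqrt 2) * cnj (complex_of_real (1 / sqrt 2)) = complex_of_real (1/2)"
    proof -
      have "(1/sqrt 2)*(1/sqrt 2) = (1/2::real)" by (simp add: real_sqrt_mult[symmetric])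
      then show ?thesis by (metis complex_cnj_complex_of_real of_real_mult)
    qed
    have ev: "(p i j *\<^sub>R proj (Dket i j)) $ r $ c = complex_of_real (p i j) * (Dket i j $ r * cnj (Dket i j $ c))"
      by (simp only: scaleR_entry proj_def vec_lambda_beta)
    have ev': "(case q of (i, j) \<Rightarrow> p i j *\<^sub>R proj (Dket i j)) $ r $ c = complex_of_real (p i j) * (Dket i j $ r * cnj (Dket i j $ c))"
      unfolding q(1) prod.case by (rule ev)
    show "(case q of (i, j) \<Rightarrow> p i j *\<^sub>R proj (Dket i j)) $ r $ c = (if q = q0 r then (if q0 r = q0 c then complex_of_real (p (fst (q0 r)) (snd (q0 r)) * (if fst r = snd r then 1 else 1/2)) else 0) else 0)"
    proof (cases "q = q0 r")
      case False
      then show ?thesis using q unfolding ev' by (simp add: Dket_entry)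
    next
      case T1: True
      show ?thesis
      proof (cases "q0 r = q0 c")
        case False
        then show ?thesis using q T1 unfolding ev' by (simp add: Dket_entry)
      next
        case True
        have pq: "p i j = p (fst (q0 r)) (snd (q0 r))" using q T1 by (metis fst_conv snd_conv)
        show ?thesis
        proof (cases "fst r = snd r")
          case True
          then show ?thesis using q T1 \<open>q0 r = q0 c\<close> fr pq unfolding ev' by (simp add: Dket_entry)
        next
          case False
          then show ?thesis using q T1 \<open>q0 r = q0 c\<close> fr pq s unfolding ev' by (simp add: Dket_entry)
        qed
      qed
    qed
  qed
  also have "\<dots> = (if q0 r = q0 c then complex_of_real (p (fst (q0 r)) (snd (q0 r)) * (if fst r = snd r then 1 else 1/2)) else 0)"
    by (subst sum.delta) (auto simp: q0_def min_le_iff_disj)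
  finally show ?thesis .
qed


lemma q0_eq_iff: "q0 (x,y) = q0 (u,v) \<longleftrightarrow> (x = u \<and> y = v) \<or> (x = v \<and> y = u)"
  for x y u v :: "'n::linorder"
  by (cases "x \<le> y"; cases "u \<le> v") (auto simp: q0_def min_def max_def)

lemma diag_sum:
  fixes g :: "'n::finite \<times> 'n \<Rightarrow> 'b::comm_monoid_add"
  assumes "\<And>a b. a \<noteq> b \<Longrightarrow> g (a,b) = 0"
  shows "(\<Sum>r\<in>UNIV. g r) = (\<Sum>a\<in>UNIV. g (a,a))"
proof -
  have "(\<Sum>r\<in>UNIV. g r) = (\<Sum>r\<in>range (\<lambda>a. (a,a)). g r)"
    by (rule sum.mono_neutral_right) (auto, metis assms rangeI)
  also have "\<dots> = (\<Sum>a\<in>UNIV. g (a,a))"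
    by (subst sum.reindex) (auto simp: inj_on_def)
  finally show ?thesis .
qed

lemma ds_entry_sym:
  fixes p :: "'n::{finite,linorder} \<Rightarrow> 'n \<Rightarrow> real"
  assumes sym: "\<And>i j. p j i = p i j"
  shows "ds_state p $ (x,y) $ (u,v) = (if q0 (x,y) = q0 (u,v) then complex_of_real (assoc_matrix p $ x $ y) else 0)"
proof -
  have "p (fst (q0 (x,y))) (snd (q0 (x,y))) = p x y" using sym by (simp add: q0_def min_def max_def)
  note pe = this
  show ?thesis
  proof (cases "q0 (x,y) = q0 (u,v)")
    case True
    show ?thesis unfolding ds_entry[of p "(x,y)" "(u,v)"] if_P[OF True] pe
      using True by (simp add: assoc_matrix_def)
  next
    case False
    show ?thesis unfolding ds_entry[of p "(x,y)" "(u,v)"] if_not_P[OF False] by simp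
  qed
qed

lemma quad_nonneg:
  fixes p :: "'n::{finite,linorder} \<Rightarrow> 'n \<Rightarrow> real"
  assumes sym: "\<And>i j. p j i = p i j" and ppt: "PPT (ds_state p)"
  shows "0 \<le> (\<Sum>a\<in>UNIV. \<Sum>b\<in>UNIV. x a * assoc_matrix p $ a $ b * x b)"
proof -
  define X :: "complex^('n\<times>'n)" where "X = (\<chi> r. if fst r = snd r then complex_of_real (x (fst r)) else 0)"
  define P where "P = ptransB (ds_state p)"
  have P: "P $ (a,a) $ (b,b) = complex_of_real (assoc_matrix p $ a $ b)" for a b
    unfolding P_def ptransB_def by (simp add: ds_entry_sym[OF sym] q0_eq_iff)
  have "(\<Sum>r\<in>UNIV. \<Sum>c\<in>UNIV. cnj (X $ r) * P $ r $ c * X $ c)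
        = (\<Sum>a\<in>UNIV. \<Sum>c\<in>UNIV. cnj (X $ (a,a)) * P $ (a,a) $ c * X $ c)"
    by (rule diag_sum) (simp add: X_def)
  also have "\<dots> = (\<Sum>a\<in>UNIV. \<Sum>b\<in>UNIV. cnj (X $ (a,a)) * P $ (a,a) $ (b,b) * X $ (b,b))"
    by (rule sum.cong[OF refl], rule diag_sum) (simp add: X_def)
  also have "\<dots> = complex_of_real (\<Sum>a\<in>UNIV. \<Sum>b\<in>UNIV. x a * assoc_matrix p $ a $ b * x b)"
    by (simp add: X_def P)
  finally have e: "(\<Sum>r\<in>UNIV. \<Sum>c\<in>UNIV. cnj (X $ r) * P $ r $ c * X $ c) = complex_of_real (\<Sum>a\<in>UNIV. \<Sum>b\<in>UNIV. x a * assoc_matrix p $ a $ b * x b)" .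
  from ppt have "0 \<le> Re (\<Sum>r\<in>UNIV. \<Sum>c\<in>UNIV. cnj (X $ r) * P $ r $ c * X $ c)"
    unfolding PPT_def psd_def P_def by blast
  then show ?thesis unfolding e by simp
qed

lemma quad_psd2_arith:
  fixes A B C :: real
  assumes q: "\<And>s t. 0 \<le> s^2 * A + 2 * s * t * C + t^2 * B" and B: "B \<ge> 0" and C: "C \<ge> 0"
  shows "C^2 \<le> A * B"
proof (cases "B = 0")
  case False
  then have Bp: "B > 0" using B by simp
  have "0 \<le> B^2 * A + 2 * B * (-C) * C + (-C)^2 * B" using q[of B "-C"] .
  also have "\<dots> = B * (A*B - C^2)" by (simp add: algebra_simps power2_eq_square)
  finally have "0 \<le> A*B - C^2" using Bp by (simp add: zero_le_mult_iff)
  then show ?thesis by simp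
next
  case True
  show ?thesis
  proof (cases "C = 0")
    case False
    then have Cp: "C > 0" using C by simp
    have "0 \<le> 1^2 * A + 2 * 1 * (-(A+1)/(2*C)) * C + (-(A+1)/(2*C))^2 * B" using q .
    also have "\<dots> = -1" using True Cp by (simp add: field_simps)
    finally show ?thesis by simp
  qed (simp add: True)
qed

lemma psd2_assoc:
  fixes p :: "'n::{finite,linorder} \<Rightarrow> 'n \<Rightarrow> real"
  assumes sym: "\<And>i j. p j i = p i j" and nn: "\<And>i j. 0 \<le> p i j" and ppt: "PPT (ds_state p)"
  shows "(assoc_matrix p $ i $ j)^2 \<le> assoc_matrix p $ i $ i * assoc_matrix p $ j $ j"
proof (cases "i = j")
  case True then show ?thesis by (simp add: power2_eq_square)
next
  case False
  define M where "M a b = assoc_matrix p $ a $ b" for a b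
  have Ms: "M a b = M b a" for a b using sym by (simp add: M_def assoc_matrix_def)
  have q: "0 \<le> s^2 * M i i + 2 * s * t * M i j + t^2 * M j j" for s t
  proof -
    define x where "x a = (if a = i then s else 0) + (if a = j then t else 0)" for a
    have inner: "(\<Sum>b\<in>UNIV. x a * M a b * x b) = x a * (s * M a i + t * M a j)" for a
      by (simp add: x_def algebra_simps sum.distrib sum_distrib_left if_distrib if_distribR sum.If_cases)
    have "(\<Sum>a\<in>UNIV. \<Sum>b\<in>UNIV. x a * M a b * x b) = s^2 * M i i + 2 * s * t * M i j + t^2 * M j j"
      unfolding inner using False Ms[of j i]
      by (simp add: x_def algebra_simps sum.distrib sum_distrib_left if_distrib if_distribR sum.If_cases power2_eq_square)
    with quad_nonneg[OF sym ppt, of x] show ?thesis by (simp add: M_def)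
  qed
  have "M j j \<ge> 0" "M i j \<ge> 0" using nn by (auto simp: M_def assoc_matrix_def)
  from quad_psd2_arith[OF q this] show ?thesis by (simp add: M_def)
qed

lemma sumM:
  fixes p :: "'n::{finite,linorder} \<Rightarrow> 'n \<Rightarrow> real"
  assumes sym: "\<And>i j. p j i = p i j"
  shows "(\<Sum>x\<in>UNIV. \<Sum>y\<in>UNIV. assoc_matrix p $ x $ y) = (\<Sum>(i,j) \<in> {(i,j). i \<le> j}. p i j)"
proof -
  define f where "f r = assoc_matrix p $ fst r $ snd r" for r
  define S where "S = {(i,j). (i::'n) \<le> j}"
  define T where "T = {(i,j). (j::'n) < i}"
  have fs: "f (prod.swap r) = f r" for r using sym by (simp add: f_def assoc_matrix_def)
  have "(\<Sum>x\<in>UNIV. \<Sum>y\<in>UNIV. assoc_matrix p $ x $ y) = (\<Sum>r\<in>UNIV. f r)"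
    by (simp add: f_def sum.cartesian_product case_prod_beta')
  also have "UNIV = S \<union> T" by (auto simp: S_def T_def)
  also have "sum f (S \<union> T) = sum f S + sum f T"
    by (rule sum.union_disjoint) (auto simp: S_def T_def)
  also have "T = prod.swap ` {r \<in> S. fst r \<noteq> snd r}"
    by (auto simp: S_def T_def image_iff)
  also have "sum f \<dots> = sum (f \<circ> prod.swap) {r \<in> S. fst r \<noteq> snd r}"
    by (rule sum.reindex) (simp add: inj_on_def)
  also have "\<dots> = (\<Sum>r\<in>S. if fst r \<noteq> snd r then f r else 0)"
    by (simp add: fs sum.inter_filter)
  also have "sum f S + \<dots> = (\<Sum>r\<in>S. f r + (if fst r \<noteq> snd r then f r else 0))"
    by (simp add: sum.distrib)
  also have "\<dots> = (\<Sum>(i,j)\<in>S. p i j)"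
    by (rule sum.cong) (auto simp: f_def assoc_matrix_def)
  finally show ?thesis by (simp add: S_def)
qed



lemma psd_proj:
  assumes "c \<ge> 0"
  shows "psd (c *\<^sub>R proj (v::complex^'a))"
  unfolding psd_def
proof
  fix x :: "complex^'a"
  define z where "z = (\<Sum>i\<in>UNIV. cnj (x $ i) * v $ i)"
  have "(\<Sum>i\<in>UNIV. \<Sum>j\<in>UNIV. cnj (x $ i) * (c *\<^sub>R proj v) $ i $ j * x $ j)
      = complex_of_real c * ((\<Sum>i\<in>UNIV. cnj (x $ i) * v $ i) * (\<Sum>j\<in>UNIV. cnj (v $ j) * x $ j))"
  proof -
    have "(\<Sum>i\<in>UNIV. \<Sum>j\<in>UNIV. cnj (x $ i) * (c *\<^sub>R proj v) $ i $ j * x $ j)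
      = (\<Sum>i\<in>UNIV. \<Sum>j\<in>UNIV. complex_of_real c * ((cnj (x $ i) * v $ i) * (cnj (v $ j) * x $ j)))"
      unfolding scaleR_entry by (simp add: proj_def algebra_simps)
    also have "\<dots> = complex_of_real c * ((\<Sum>i\<in>UNIV. cnj (x $ i) * v $ i) * (\<Sum>j\<in>UNIV. cnj (v $ j) * x $ j))"
      unfolding sum_product by (simp add: sum_distrib_left)
    finally show ?thesis .
  qed
  also have "(\<Sum>j\<in>UNIV. cnj (v $ j) * x $ j) = cnj z" by (simp add: z_def mult.commute)
  also have "(\<Sum>i\<in>UNIV. cnj (x $ i) * v $ i) = z" by (simp add: z_def)
  also have "z * cnj z = complex_of_real ((norm z)^2)" by (rule complex_norm_square[symmetric])
  finally have e: "(\<Sum>i\<in>UNIV. \<Sum>j\<in>UNIV. cnj (x $ i) * (c *\<^sub>R proj v) $ i $ j * x $ j) = complex_of_real (c * (norm z)^2)"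
    by simp
  show "(\<Sum>i\<in>UNIV. \<Sum>j\<in>UNIV. cnj (x $ i) * (c *\<^sub>R proj v) $ i $ j * x $ j) \<in> \<real> \<and>
        0 \<le> Re (\<Sum>i\<in>UNIV. \<Sum>j\<in>UNIV. cnj (x $ i) * (c *\<^sub>R proj v) $ i $ j * x $ j)"
    unfolding e using assms by simp
qed

lemma mtrace_proj:
  "mtrace (c *\<^sub>R proj (v::complex^'a)) = complex_of_real (c * (\<Sum>i\<in>UNIV. (norm (v $ i))^2))"
  unfolding mtrace_def scaleR_entry by (simp add: proj_def complex_norm_square[symmetric] sum_distrib_left)

lemma density_ket: "density (1 *\<^sub>R proj (ket (i::'a::finite)))"
proof -
  have "mtrace (1 *\<^sub>R proj (ket i)) = 1"
  proof -
    have "(norm (ket i $ x))^2 = (if x = i then 1 else 0)" for x by (simp add: ket_entry)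
    then show ?thesis unfolding mtrace_proj by simp
  qed
  then show ?thesis using psd_proj[of 1] by (simp add: density_def)
qed

definition Phi :: "('n::{finite,linorder} \<Rightarrow> real) \<Rightarrow> complex^('n\<times>'n)^('n\<times>'n)" where
  "Phi w = (\<chi> r c. if q0 r = q0 c then complex_of_real (w (fst r) * w (snd r)) else 0)"

lemma phase_avg:
  fixes w :: "'n::{finite,linorder} \<Rightarrow> real" and g :: "'n \<Rightarrow> nat" and N :: nat
  assumes wn: "\<And>i. w i \<ge> 0" and N: "N > 0"
    and gq: "\<And>x y u v. g x + g y = g u + g v \<longleftrightarrow> q0 (x,y) = q0 (u,v)"
    and gb: "\<And>x y. g x + g y < N"
  shows "\<exists>(wt::nat\<Rightarrow>real) A. (\<forall>t<N. 0 \<le> wt t \<and> density (A t)) \<and>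
     (\<Sum>t<N. wt t) = (\<Sum>i\<in>UNIV. w i)^2 \<and> (\<Sum>t<N. wt t *\<^sub>R kron (A t) (A t)) = Phi w"
proof -
  define W where "W = (\<Sum>i\<in>UNIV. w i)"
  have W0: "W \<ge> 0" using wn by (simp add: W_def sum_nonneg)
  show ?thesis
  proof (cases "W = 0")
    case True
    then have w0: "w i = 0" for i using wn unfolding W_def by (simp add: sum_nonneg_eq_0_iff)
    have "Phi w = 0" by (simp add: Phi_def w0 vec_eq_iff)
    moreover have "density (1 *\<^sub>R proj (ket (undefined::'n)))" by (rule density_ket)
    ultimately show ?thesis
      by (intro exI[of _ "\<lambda>_. 0"] exI[of _ "\<lambda>_. 1 *\<^sub>R proj (ket (undefined::'n))"]) (simp add: True[unfolded W_def])
  next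
    case False
    then have Wp: "W > 0" using W0 by simp
    define \<psi> where "\<psi> t = (\<chi> i. complex_of_real (sqrt (w i)) * cis (2*pi*real t*real (g i)/real N))" for t
    define A where "A t = (1/W) *\<^sub>R proj (\<psi> t)" for t
    have dens: "density (A t)" for t
    proof -
      have "(norm (\<psi> t $ i))^2 = w i" for i using wn[of i] by (simp add: \<psi>_def norm_mult)
      then have "mtrace (A t) = 1" unfolding A_def mtrace_proj using Wp by (simp add: W_def)
      then show ?thesis using psd_proj[of "1/W"] Wp by (simp add: density_def A_def)
    qed
    have ent: "(\<Sum>t<N. (W^2/N) *\<^sub>R kron (A t) (A t)) $ r $ c = Phi w $ r $ c" for r c
    proof -
      obtain x y where r: "r = (x,y)" by fastforce
      obtain u v where c: "c = (u,v)" by fastforce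
      define m :: int where "m = int (g x + g y) - int (g u + g v)"
      define s where "s = sqrt (w x) * sqrt (w y) * sqrt (w u) * sqrt (w v)"
      have trm: "((W^2/N) *\<^sub>R kron (A t) (A t)) $ r $ c = complex_of_real (s / N) * cis (2*pi*real t * of_int m/real N)" for t
      proof -
        define a where "a = 2*pi*real t*real (g x)/real N"
        define b where "b = 2*pi*real t*real (g y)/real N"
        define a' where "a' = 2*pi*real t*real (g u)/real N"
        define b' where "b' = 2*pi*real t*real (g v)/real N"
        have "((W^2/N) *\<^sub>R kron (A t) (A t)) $ r $ c = complex_of_real (W^2/N) * ((A t) $ x $ u * (A t) $ y $ v)"
          unfolding scaleR_entry by (simp add: kron_def r c)
        also have "\<dots> = complex_of_real (W^2/N) * (complex_of_real (1/W) * (\<psi> t $ x * cnj (\<psi> t $ u)) * (complex_of_real (1/W) * (\<psi> t $ y * cnj (\<psi> t $ v))))"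
          unfolding A_def scaleR_entry by (simp add: proj_def)
        also have "\<dots> = complex_of_real (W^2/N * (1/W) * (1/W)) * (\<psi> t $ x * cnj (\<psi> t $ u) * (\<psi> t $ y * cnj (\<psi> t $ v)))"
          by (simp add: algebra_simps)
        also have "W^2/N * (1/W) * (1/W) = 1/N" using Wp by (simp add: field_simps power2_eq_square)
        also have "\<psi> t $ x * cnj (\<psi> t $ u) * (\<psi> t $ y * cnj (\<psi> t $ v)) = complex_of_real s * (cis a * cis (-a') * (cis b * cis (-b')))"
          by (simp add: \<psi>_def s_def a_def b_def a'_def b'_def cis_cnj algebra_simps)
        also have "cis a * cis (-a') * (cis b * cis (-b')) = cis (2*pi*real t * of_int m/real N)"
        proof -
          have "cis a * cis (-a') * (cis b * cis (-b')) = cis (a + - a' + (b + - b'))" by (simp add: cis_mult)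
          also have "a + - a' + (b + - b') = 2*pi*real t * of_int m/real N"
            using N by (simp add: a_def b_def a'_def b'_def m_def field_simps)
          finally show ?thesis .
        qed
        finally show ?thesis by (simp add: algebra_simps)
      qed
      have mb: "\<bar>m\<bar> < int N" using gb[of x y] gb[of u v] by (simp add: m_def)
      have "(\<Sum>t<N. (W^2/N) *\<^sub>R kron (A t) (A t)) $ r $ c = (\<Sum>t<N. ((W^2/N) *\<^sub>R kron (A t) (A t)) $ r $ c)"
        by (simp only: sum_component)
      also have "\<dots> = complex_of_real (s / N) * (\<Sum>t<N. cis (2*pi*real t * of_int m/real N))"
        unfolding trm by (simp add: sum_distrib_left)
      also have "\<dots> = complex_of_real (s / N) * (if m = 0 then of_nat N else 0)"
        by (simp add: roots_sum[OF N mb])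
      also have "\<dots> = Phi w $ r $ c"
      proof (cases "m = 0")
        case True
        then have "g x + g y = g u + g v" by (simp add: m_def)
        then have "q0 (x,y) = q0 (u,v)" using gq by blast
        then have xy: "(x = u \<and> y = v) \<or> (x = v \<and> y = u)" by (simp add: q0_eq_iff)
        have sx: "sqrt (w z) * sqrt (w z) = w z" for z using wn[of z] by simp
        have "s = w x * w y" using xy
        proof
          assume "x = u \<and> y = v" then show ?thesis unfolding s_def using sx[of x] sx[of y] by (simp add: algebra_simps)
        next
          assume "x = v \<and> y = u" then show ?thesis unfolding s_def using sx[of x] sx[of y] by (simp add: algebra_simps)
        qed
        then show ?thesis using True N \<open>q0 (x,y) = q0 (u,v)\<close> by (simp add: Phi_def r c)
      next
        case False
        then have "g x + g y \<noteq> g u + g v" by (simp add: m_def)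
        then have "q0 (x,y) \<noteq> q0 (u,v)" using gq by blast
        then show ?thesis using False by (simp add: Phi_def r c)
      qed
      finally show ?thesis .
    qed
    show ?thesis
    proof (intro exI[of _ "\<lambda>_. W^2/N"] exI[of _ A] conjI allI impI)
      show "(\<Sum>t<N. W^2/N) = (\<Sum>i\<in>UNIV. w i)^2" using N by (simp add: W_def)
      show "(\<Sum>t<N. (W^2/N) *\<^sub>R kron (A t) (A t)) = Phi w" using ent by (simp add: vec_eq_iff)
    qed (use dens in auto)
  qed
qed

lemma sum_split2:
  fixes f :: "nat \<Rightarrow> 'a::comm_monoid_add"
  shows "(\<Sum>k<2*N. f k) = (\<Sum>k<N. f k) + (\<Sum>k<N. f (k+N))"
proof -
  have "{..<2*N} = {..<N} \<union> {N..<2*N}" by auto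
  then have "(\<Sum>k<2*N. f k) = sum f ({..<N} \<union> {N..<2*N})" by simp
  also have "\<dots> = (\<Sum>k<N. f k) + sum f {N..<2*N}"
    by (rule sum.union_disjoint) auto
  also have "sum f {N..<2*N} = (\<Sum>k<N. f (k+N))"
    using sum.shift_bounds_nat_ivl[of f 0 N N] by (simp add: lessThan_atLeast0 mult_2)
  finally show ?thesis .
qed

theorem theorem4:
  fixes p :: "'n::{finite,linorder} \<Rightarrow> 'n \<Rightarrow> real"
  assumes "CARD('n) \<ge> 2"
    and "\<And>i j. p j i = p i j"
    and "\<And>i j. 0 \<le> p i j"
    and "(\<Sum>(i,j) \<in> {(i,j). i \<le> j}. p i j) = 1"
    and "PPT (ds_state p)"
    and "rank (assoc_matrix p) \<le> 2"
  shows "separable (ds_state p)"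
proof -
  note psym = assms(2) and nn = assms(3) and tr = assms(4) and ppt = assms(5) and rk = assms(6)
  define M where "M = assoc_matrix p"
  define Mf where "Mf i j = M $ i $ j" for i j
  have Ms: "Mf i j = Mf j i" for i j using psym by (simp add: Mf_def M_def assoc_matrix_def)
  have Mn: "Mf i j \<ge> 0" for i j using nn by (simp add: Mf_def M_def assoc_matrix_def)
  have Mp: "(Mf i j)^2 \<le> Mf i i * Mf j j" for i j
    using psd2_assoc[OF psym nn ppt] by (simp add: Mf_def M_def)
  have Msp: "\<exists>x y. \<forall>j. Mf i j = x * Mf k j + y * Mf l j" if D: "Mf k k * Mf l l - (Mf k l)^2 \<noteq> 0" for k l i
  proof -
    have ind: "u = 0 \<and> v = 0" if uv: "u *\<^sub>R M$k + v *\<^sub>R M$l = 0" for u v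
    proof -
      have e1: "u * Mf k k + v * Mf l k = 0" using arg_cong[OF uv, of "\<lambda>z. z $ k"] by (simp add: Mf_def)
      have e2: "u * Mf k l + v * Mf l l = 0" using arg_cong[OF uv, of "\<lambda>z. z $ l"] by (simp add: Mf_def)
      have "u * (Mf k k * Mf l l - (Mf k l)^2) = Mf l l * (u * Mf k k + v * Mf l k) - Mf k l * (u * Mf k l + v * Mf l l)"
        using Ms[of l k] by (simp add: algebra_simps power2_eq_square)
      then have "u * (Mf k k * Mf l l - (Mf k l)^2) = 0" using e1 e2 by simp
      then have u: "u = 0" using D by simp
      have "v * (Mf k k * Mf l l - (Mf k l)^2) = Mf k k * (u * Mf k l + v * Mf l l) - Mf k l * (u * Mf k k + v * Mf l k)"
        using Ms[of l k] by (simp add: algebra_simps power2_eq_square)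
      then have "v * (Mf k k * Mf l l - (Mf k l)^2) = 0" using e1 e2 by simp
      then have "v = 0" using D by simp
      with u show ?thesis by simp
    qed
    obtain x y where "M$i = x *\<^sub>R M$k + y *\<^sub>R M$l"
      using rank2_span[of M k l i] rk ind unfolding M_def by blast
    then have "Mf i j = x * Mf k j + y * Mf l j" for j
      using arg_cong[of _ _ "\<lambda>z. z $ j"] by (simp add: Mf_def)
    then show ?thesis by blast
  qed
  obtain a b where ab: "\<And>i. a i \<ge> 0 \<and> b i \<ge> 0" and Mab: "\<And>i j. Mf i j = a i * a j + b i * b j"
    using cp_decomp[of Mf, OF Ms Mn Mp Msp] by blast
  have rho: "ds_state p = Phi a + Phi b"
  proof -
    have "ds_state p $ r $ c = (Phi a + Phi b) $ r $ c" for r c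
    proof -
      obtain x y where r: "r = (x,y)" by fastforce
      obtain u v where c: "c = (u,v)" by fastforce
      show ?thesis
        using Mab[of x y] unfolding r c ds_entry_sym[OF psym]
        by (simp add: Phi_def Mf_def M_def)
    qed
    then show ?thesis by (simp add: vec_eq_iff)
  qed
  have wsum: "(\<Sum>i\<in>UNIV. a i)^2 + (\<Sum>i\<in>UNIV. b i)^2 = 1"
  proof -
    have "(\<Sum>i\<in>UNIV. a i)^2 + (\<Sum>i\<in>UNIV. b i)^2 = (\<Sum>x\<in>UNIV. \<Sum>y\<in>UNIV. Mf x y)"
      by (simp add: Mab power2_eq_square sum_product sum.distrib)
    also have "\<dots> = 1" using sumM[of p, OF psym] tr by (simp add: Mf_def M_def)
    finally show ?thesis .
  qed
  obtain e :: "'n \<Rightarrow> nat" where e: "bij_betw e UNIV {0..<CARD('n)}"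
    using ex_bij_betw_finite_nat[of "UNIV :: 'n set"] by auto
  have einj: "inj e" using e by (simp add: bij_betw_def)
  have elt: "e x < CARD('n)" for x using e by (auto simp: bij_betw_def)
  define d where "d = CARD('n)"
  have d1: "d \<ge> 1" using assms(1) by (simp add: d_def)
  define g where "g x = (3::nat)^(e x)" for x
  define N where "N = (3::nat)^d"
  have N: "N > 0" by (simp add: N_def)
  have gq: "g x + g y = g u + g v \<longleftrightarrow> q0 (x,y) = q0 (u,v)" for x y u v
  proof
    assume "g x + g y = g u + g v"
    then have "(e x = e u \<and> e y = e v) \<or> (e x = e v \<and> e y = e u)" unfolding g_def by (rule pow3_eq)
    then have "(x = u \<and> y = v) \<or> (x = v \<and> y = u)" using einj by (auto dest: injD)
    then show "q0 (x,y) = q0 (u,v)" by (simp add: q0_eq_iff)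
  next
    assume "q0 (x,y) = q0 (u,v)"
    then have "(x = u \<and> y = v) \<or> (x = v \<and> y = u)" by (simp add: q0_eq_iff)
    then show "g x + g y = g u + g v" by auto
  qed
  have gb: "g x + g y < N" for x y
  proof -
    have "e x \<le> d - 1" "e y \<le> d - 1" using elt[of x] elt[of y] by (auto simp: d_def)
    then have "g x \<le> 3^(d-1)" "g y \<le> 3^(d-1)" unfolding g_def by (auto intro: power_increasing)
    then have "g x + g y \<le> 2 * 3^(d-1)" by simp
    also have "\<dots> < 3 * 3^(d-1)" by simp
    also have "3 * 3^(d-1) = N" using d1 by (simp add: N_def power_eq_if[of 3 d])
    finally show ?thesis .
  qed
  obtain wa Aa where A1: "\<forall>t<N. 0 \<le> wa t \<and> density (Aa t)" and A2: "(\<Sum>t<N. wa t) = (\<Sum>i\<in>UNIV. a i)^2"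
    and A3: "(\<Sum>t<N. wa t *\<^sub>R kron (Aa t) (Aa t)) = Phi a"
    using phase_avg[of a N g, OF _ N gq gb] ab by blast
  obtain wb Ab where B1: "\<forall>t<N. 0 \<le> wb t \<and> density (Ab t)" and B2: "(\<Sum>t<N. wb t) = (\<Sum>i\<in>UNIV. b i)^2"
    and B3: "(\<Sum>t<N. wb t *\<^sub>R kron (Ab t) (Ab t)) = Phi b"
    using phase_avg[of b N g, OF _ N gq gb] ab by blast
  define W where "W k = (if k < N then wa k else wb (k - N))" for k
  define S where "S k = (if k < N then Aa k else Ab (k - N))" for k
  show ?thesis
    unfolding separable_def
  proof (intro exI[of _ "2*N"] exI[of _ W] exI[of _ S] exI[of _ S] conjI)
    show "\<forall>k<2*N. 0 \<le> W k \<and> density (S k) \<and> density (S k)"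
      using A1 B1 by (auto simp: W_def S_def)
  next
    show "(\<Sum>k<2*N. W k) = 1" unfolding sum_split2 using A2 B2 wsum by (simp add: W_def)
  next
    show "ds_state p = (\<Sum>k<2*N. W k *\<^sub>R kron (S k) (S k))"
      unfolding sum_split2 rho using A3 B3 by (simp add: W_def S_def)
  qed
qed

end
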